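(* Assume the setting in the context, with $X_A,X_B$ independent conditional on $Y$. Consider the optimization problem of maximizing $MIG^f(h_A,h_B,\mathbf{p})$ over all $h_A:\Sigma_A\to\Delta_\Sigma$, $h_B:\Sigma_B\to\Delta_\Sigma$ and $\mathbf{p}\in\Delta_\Sigma$ with all entries positive. Then: (1) (Solution $\to$ maximizer) For every random variable $Z$ with values in $\Sigma$, jointly distributed with $(X_A,X_B)$ (with $(X_A,X_B)$ having its given distribution), such that $\Pr[Z=y]>0$ for all $y$ and $X_A,X_B$ are independent conditional on $Z$, the triple $h_A^*(x_A):=(\Pr[Z=y\mid X_A=x_A])_{y\in\Sigma}$, $h_B^*(x_B):=(\Pr[Z=y\mid X_B=x_B])_{y\in\Sigma}$, $\mathbf{p}^*:=(\Pr[Z=y])_{y\in\Sigma}$ is a maximizer, and the maximum value equals $MI^f(X_A;X_B)$. (In particular this holds for $Z=Y$.) (2) (Maximizer $\to$ permuted ground truth) If moreover the prior is well-defined, $f$ is differentiable and $f'$ is injective, then for every maximizer $(h_A^*,h_B^*,\mathbf{p}^* )$ there is a permutation $\pi$ of $\Sigma$ such that $h_A^*(x_A)=(\Pr[\pi(Y)=y\mid X_A=x_A])_y$ for all $x_A$, $h_B^*(x_B)=(\Pr[\pi(Y)=y\mid X_B=x_B])_y$ for all $x_B$, and $\mathbf{p}^*=(\Pr[\pi(Y)=y])_y$.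
   Context: Let $\Sigma_A,\Sigma_B,\Sigma$ be finite nonempty sets and $(X_A,X_B,Y)$ random variables with values in $\Sigma_A\times\Sigma_B\times\Sigma$ (joint law called the prior), with $\Pr[X_A=x_A]>0$, $\Pr[X_B=x_B]>0$, $\Pr[Y=y]>0$ for all values. $\Delta_\Sigma$ is the set of probability vectors on $\Sigma$. $K(x_A,x_B):=\frac{\Pr[X_A=x_A,X_B=x_B]}{\Pr[X_A=x_A]\Pr[X_B=x_B]}$. Let $f:[0,\infty)\to\mathbb{R}$ be convex with $f(1)=0$, $f^\star(u):=\sup_{t\ge0}(tu-f(t))$, $\partial f$ its subdifferential, and $MI^f(X_A;X_B):=\sum_{x_A,x_B}\Pr[X_A=x_A]\Pr[X_B=x_B]f(K(x_A,x_B))$. Fix a selection $g$ with $g(t)\in\partial f(t)$ for all $t$ (take $g=f'$ if $f$ is differentiable), and define the reward $R^f(\mathbf{p}_1,\mathbf{p}_2,\mathbf{p}):=g\big(\sum_{y}\mathbf{p}_1(y)\mathbf{p}_2(y)/\mathbf{p}(y)\big)$. The objective is $$MIG^f(h_A,h_B,\mathbf{p}):=\sum_{x_A,x_B}\Pr[X_A=x_A,X_B=x_B]\,R^f(h_A(x_A),h_B(x_B),\mathbf{p})-\sum_{x_A,x_B}\Pr[X_A=x_A]\Pr[X_B=x_B]\,f^\star\big(R^f(h_A(x_A),h_B(x_B),\mathbf{p})\big),$$ which is the expectation of the empirical $f$-mutual information gain (same-task average of $R^f$ minus distinct-task-pair average of $f^\star(R^f)$) over i.i.d. task samples. For a permutation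 $\pi$ of $\Sigma$, $\pi(Y)$ is the relabeled variable. Well-defined prior: consider the system, in unknowns $\mathbf{a}^{x_A}\in\Delta_\Sigma$ ($x_A\in\Sigma_A$), $\mathbf{b}^{x_B}\in\Delta_\Sigma$ ($x_B\in\Sigma_B$), $\mathbf{r}\in\Delta_\Sigma$ with positive entries: $\sum_{y}a^{x_A}_y b^{x_B}_y/r_y=K(x_A,x_B)$ for all $(x_A,x_B)$. The prior is well-defined if for any two solutions $(\{\mathbf{a}^{x_A}\},\{\mathbf{b}^{x_B}\},\mathbf{r})$ and $(\{\mathbf{c}^{x_A}\},\{\mathbf{d}^{x_B}\},\mathbf{r}')$ there is a permutation $\pi$ of $\Sigma$ with $\mathbf{r}=\pi\mathbf{r}'$, $\mathbf{a}^{x_A}=\pi\mathbf{c}^{x_A}$ and $\mathbf{b}^{x_B}=\pi\mathbf{d}^{x_B}$ for all $x_A,x_B$, where $\pi$ acts on vectors by permuting coordinates. *)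

theory Defs
  imports "HOL-Analysis.Analysis"
begin

text \<open>Finite alphabets are modelled as finite types 'a (Sigma_A), 'b (Sigma_B), 'c (Sigma).
  A joint law on Sigma_A x Sigma_B x Sigma is a function P :: 'a => 'b => 'c => real
  (P xa xb y = Pr[X_A = xa, X_B = xb, Y = y]).\<close>

definition prob_vec :: "('c::finite \<Rightarrow> real) \<Rightarrow> bool" where
  "prob_vec v \<longleftrightarrow> (\<forall>y. 0 \<le> v y) \<and> (\<Sum>y\<in>UNIV. v y) = 1"

definition pos_prob_vec :: "('c::finite \<Rightarrow> real) \<Rightarrow> bool" where
  "pos_prob_vec v \<longleftrightarrow> prob_vec v \<and> (\<forall>y. 0 < v y)"

definition joint_dist :: "('a::finite \<Rightarrow> 'b::finite \<Rightarrow> 'c::finite \<Rightarrow> real) \<Rightarrow> bool" where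
  "joint_dist P \<longleftrightarrow> (\<forall>xa xb y. 0 \<le> P xa xb y) \<and> (\<Sum>xa\<in>UNIV. \<Sum>xb\<in>UNIV. \<Sum>y\<in>UNIV. P xa xb y) = 1"

definition margA :: "('a::finite \<Rightarrow> 'b::finite \<Rightarrow> 'c::finite \<Rightarrow> real) \<Rightarrow> 'a \<Rightarrow> real" where
  "margA P xa = (\<Sum>xb\<in>UNIV. \<Sum>y\<in>UNIV. P xa xb y)"
definition margB :: "('a::finite \<Rightarrow> 'b::finite \<Rightarrow> 'c::finite \<Rightarrow> real) \<Rightarrow> 'b \<Rightarrow> real" where
  "margB P xb = (\<Sum>xa\<in>UNIV. \<Sum>y\<in>UNIV. P xa xb y)"
definition margY :: "('a::finite \<Rightarrow> 'b::finite \<Rightarrow> 'c::finite \<Rightarrow> real) \<Rightarrow> 'c \<Rightarrow> real" where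
  "margY P y = (\<Sum>xa\<in>UNIV. \<Sum>xb\<in>UNIV. P xa xb y)"
definition margAB :: "('a::finite \<Rightarrow> 'b::finite \<Rightarrow> 'c::finite \<Rightarrow> real) \<Rightarrow> 'a \<Rightarrow> 'b \<Rightarrow> real" where
  "margAB P xa xb = (\<Sum>y\<in>UNIV. P xa xb y)"
definition margAY :: "('a::finite \<Rightarrow> 'b::finite \<Rightarrow> 'c::finite \<Rightarrow> real) \<Rightarrow> 'a \<Rightarrow> 'c \<Rightarrow> real" where
  "margAY P xa y = (\<Sum>xb\<in>UNIV. P xa xb y)"
definition margBY :: "('a::finite \<Rightarrow> 'b::finite \<Rightarrow> 'c::finite \<Rightarrow> real) \<Rightarrow> 'b \<Rightarrow> 'c \<Rightarrow> real" where
  "margBY P xb y = (\<Sum>xa\<in>UNIV. P xa xb y)"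

definition cond_indep :: "('a::finite \<Rightarrow> 'b::finite \<Rightarrow> 'c::finite \<Rightarrow> real) \<Rightarrow> bool" where
  "cond_indep P \<longleftrightarrow> (\<forall>xa xb y. P xa xb y * margY P y = margAY P xa y * margBY P xb y)"

definition Kmat :: "('a::finite \<Rightarrow> 'b::finite \<Rightarrow> 'c::finite \<Rightarrow> real) \<Rightarrow> 'a \<Rightarrow> 'b \<Rightarrow> real" where
  "Kmat P xa xb = margAB P xa xb / (margA P xa * margB P xb)"

definition fconj :: "(real \<Rightarrow> real) \<Rightarrow> real \<Rightarrow> real" where
  "fconj f u = (SUP t\<in>{0..}. t * u - f t)"

definition subgrad :: "(real \<Rightarrow> real) \<Rightarrow> real \<Rightarrow> real \<Rightarrow> bool" where
  "subgrad f t c \<longleftrightarrow> (\<forall>s\<ge>0. f t + c * (s - t) \<le> f s)"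

definition Rf :: "(real \<Rightarrow> real) \<Rightarrow> ('c::finite \<Rightarrow> real) \<Rightarrow> ('c \<Rightarrow> real) \<Rightarrow> ('c \<Rightarrow> real) \<Rightarrow> real" where
  "Rf g p1 p2 p = g (\<Sum>y\<in>UNIV. p1 y * p2 y / p y)"

definition MIG :: "(real \<Rightarrow> real) \<Rightarrow> (real \<Rightarrow> real) \<Rightarrow> ('a::finite \<Rightarrow> 'b::finite \<Rightarrow> 'c::finite \<Rightarrow> real)
    \<Rightarrow> ('a \<Rightarrow> 'c \<Rightarrow> real) \<Rightarrow> ('b \<Rightarrow> 'c \<Rightarrow> real) \<Rightarrow> ('c \<Rightarrow> real) \<Rightarrow> real" where
  "MIG f g P hA hB p =
     (\<Sum>xa\<in>UNIV. \<Sum>xb\<in>UNIV. margAB P xa xb * Rf g (hA xa) (hB xb) p)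
   - (\<Sum>xa\<in>UNIV. \<Sum>xb\<in>UNIV. margA P xa * margB P xb * fconj f (Rf g (hA xa) (hB xb) p))"

definition MIf :: "(real \<Rightarrow> real) \<Rightarrow> ('a::finite \<Rightarrow> 'b::finite \<Rightarrow> 'c::finite \<Rightarrow> real) \<Rightarrow> real" where
  "MIf f P = (\<Sum>xa\<in>UNIV. \<Sum>xb\<in>UNIV. margA P xa * margB P xb * f (Kmat P xa xb))"

definition admissible :: "('a::finite \<Rightarrow> 'c::finite \<Rightarrow> real) \<Rightarrow> ('b::finite \<Rightarrow> 'c \<Rightarrow> real) \<Rightarrow> ('c \<Rightarrow> real) \<Rightarrow> bool" where
  "admissible hA hB p \<longleftrightarrow> (\<forall>xa. prob_vec (hA xa)) \<and> (\<forall>xb. prob_vec (hB xb)) \<and> pos_prob_vec p"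

definition is_maximizer :: "(real \<Rightarrow> real) \<Rightarrow> (real \<Rightarrow> real) \<Rightarrow> ('a::finite \<Rightarrow> 'b::finite \<Rightarrow> 'c::finite \<Rightarrow> real)
    \<Rightarrow> ('a \<Rightarrow> 'c \<Rightarrow> real) \<Rightarrow> ('b \<Rightarrow> 'c \<Rightarrow> real) \<Rightarrow> ('c \<Rightarrow> real) \<Rightarrow> bool" where
  "is_maximizer f g P hA hB p \<longleftrightarrow> admissible hA hB p \<and>
     (\<forall>hA' hB' p'. admissible hA' hB' p' \<longrightarrow> MIG f g P hA' hB' p' \<le> MIG f g P hA hB p)"

text \<open>Well-defined prior. A permutation pi acts on vectors by (pi v) y = v (pi y).\<close>
definition solves_system :: "('a::finite \<Rightarrow> 'b::finite \<Rightarrow> 'c::finite \<Rightarrow> real)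
    \<Rightarrow> ('a \<Rightarrow> 'c \<Rightarrow> real) \<Rightarrow> ('b \<Rightarrow> 'c \<Rightarrow> real) \<Rightarrow> ('c \<Rightarrow> real) \<Rightarrow> bool" where
  "solves_system P a b r \<longleftrightarrow> (\<forall>xa. prob_vec (a xa)) \<and> (\<forall>xb. prob_vec (b xb)) \<and> pos_prob_vec r \<and>
     (\<forall>xa xb. (\<Sum>y\<in>UNIV. a xa y * b xb y / r y) = Kmat P xa xb)"

definition well_defined_prior :: "('a::finite \<Rightarrow> 'b::finite \<Rightarrow> 'c::finite \<Rightarrow> real) \<Rightarrow> bool" where
  "well_defined_prior P \<longleftrightarrow> (\<forall>a b r c d r'. solves_system P a b r \<and> solves_system P c d r' \<longrightarrow>
     (\<exists>\<pi>::'c \<Rightarrow> 'c. bij \<pi> \<and> (\<forall>y. r y = r' (\<pi> y)) \<and> (\<forall>xa y. a xa y = c xa (\<pi> y))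
        \<and> (\<forall>xb y. b xb y = d xb (\<pi> y))))"

end

theory Submission
  imports Defs
begin

lemma fconj_g:
  assumes sel: "\<forall>t\<ge>0. subgrad f t (g t)" and s: "s \<ge> 0"
  shows "fconj f (g s) = s * g s - f s"
proof -
  have "fconj f (g s) = Sup ((\<lambda>t. t * g s - f t) ` {0..})" by (simp add: fconj_def)
  also have "\<dots> = s * g s - f s"
  proof (rule cSup_eq_maximum)
    show "s * g s - f s \<in> (\<lambda>t. t * g s - f t) ` {0..}" using s by auto
    fix x assume "x \<in> (\<lambda>t. t * g s - f t) ` {0..}"
    then obtain t where t: "t \<ge> 0" "x = t * g s - f t" by auto
    have "f s + g s * (t - s) \<le> f t" using sel s t unfolding subgrad_def by auto
    thus "x \<le> s * g s - f s" using t by (simp add: algebra_simps)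
  qed
  finally show ?thesis .
qed


lemma subgrad_eq:
  assumes sel: "\<forall>t\<ge>0. subgrad f t (g t)" and inj: "inj_on g {0..}"
    and s: "s \<ge> 0" and K: "K \<ge> 0" and e: "f K = f s + g s * (K - s)"
  shows "s = K"
proof (rule ccontr)
  assume ne: "s \<noteq> K"
  define t where "t = (s+K)/2"
  have t0: "t \<ge> 0" using s K by (simp add: t_def)
  have a: "f s + g s * (t - s) \<le> f t" using sel s t0 unfolding subgrad_def by auto
  have b: "f t + g t * (s - t) \<le> f s" using sel s t0 unfolding subgrad_def by auto
  have c: "f t + g t * (K - t) \<le> f K" using sel K t0 unfolding subgrad_def by auto
  have ts: "t - s = (K - s)/2" "s - t = -(K-s)/2" "K - t = (K - s)/2" by (auto simp: t_def field_simps)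
  define X where "X = g s * (K - s)"
  define Y where "Y = g t * (K - s)"
  have a': "f s + X/2 \<le> f t" using a unfolding ts X_def by simp
  have b': "f t - Y/2 \<le> f s" using b unfolding ts Y_def by (simp add: algebra_simps) argo
  have c': "f t + Y/2 \<le> f s + X" using c e unfolding ts X_def Y_def by (simp add: algebra_simps)
  have "X = Y" using a' b' c' by argo
  hence "(g t - g s) * (K - s) = 0" unfolding X_def Y_def by (simp add: algebra_simps)
  hence "g t = g s" using ne by simp
  hence "t = s" using inj t0 s by (auto dest: inj_onD)
  thus False using ne by (simp add: t_def)
qed

definition sfun :: "('a \<Rightarrow> 'c::finite \<Rightarrow> real) \<Rightarrow> ('b \<Rightarrow> 'c \<Rightarrow> real) \<Rightarrow> ('c \<Rightarrow> real) \<Rightarrow> 'a \<Rightarrow> 'b \<Rightarrow> real" where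
  "sfun hA hB p xa xb = (\<Sum>y\<in>UNIV. hA xa y * hB xb y / p y)"

lemma sfun_nonneg:
  assumes "admissible hA hB p" shows "sfun hA hB p xa xb \<ge> 0"
  using assms unfolding sfun_def admissible_def prob_vec_def pos_prob_vec_def
  by (intro sum_nonneg) (auto intro!: divide_nonneg_pos mult_nonneg_nonneg)

lemma gap:
  fixes P :: "'a::finite \<Rightarrow> 'b::finite \<Rightarrow> 'c::finite \<Rightarrow> real"
  assumes sel: "\<forall>t\<ge>0. subgrad f t (g t)"
    and posA: "\<forall>xa. 0 < margA P xa" and posB: "\<forall>xb. 0 < margB P xb"
    and adm: "admissible hA hB p"
  shows "MIf f P - MIG f g P hA hB p = (\<Sum>xa\<in>UNIV. \<Sum>xb\<in>UNIV. margA P xa * margB P xb *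
     (f (Kmat P xa xb) - f (sfun hA hB p xa xb) - g (sfun hA hB p xa xb) * (Kmat P xa xb - sfun hA hB p xa xb)))"
proof -
  have "MIf f P - MIG f g P hA hB p = (\<Sum>xa\<in>UNIV. \<Sum>xb\<in>UNIV. margA P xa * margB P xb * f (Kmat P xa xb)
     - (margAB P xa xb * Rf g (hA xa) (hB xb) p - margA P xa * margB P xb * fconj f (Rf g (hA xa) (hB xb) p)))"
    unfolding MIf_def MIG_def by (simp add: sum_subtractf)
  also have "\<dots> = (\<Sum>xa\<in>UNIV. \<Sum>xb\<in>UNIV. margA P xa * margB P xb *
     (f (Kmat P xa xb) - f (sfun hA hB p xa xb) - g (sfun hA hB p xa xb) * (Kmat P xa xb - sfun hA hB p xa xb)))"
  proof (intro sum.cong refl)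
    fix xa xb
    have S: "sfun hA hB p xa xb \<ge> 0" using sfun_nonneg[OF adm] .
    have R: "Rf g (hA xa) (hB xb) p = g (sfun hA hB p xa xb)" by (simp add: Rf_def sfun_def)
    have AB: "margAB P xa xb = margA P xa * margB P xb * Kmat P xa xb"
      using posA[rule_format, of xa] posB[rule_format, of xb] by (simp add: Kmat_def)
    show "margA P xa * margB P xb * f (Kmat P xa xb)
     - (margAB P xa xb * Rf g (hA xa) (hB xb) p - margA P xa * margB P xb * fconj f (Rf g (hA xa) (hB xb) p))
     = margA P xa * margB P xb *
     (f (Kmat P xa xb) - f (sfun hA hB p xa xb) - g (sfun hA hB p xa xb) * (Kmat P xa xb - sfun hA hB p xa xb))"
      unfolding R AB fconj_g[OF sel S] by (simp add: algebra_simps)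
  qed
  finally show ?thesis .
qed

lemma sum_AY:
  "(\<Sum>z\<in>UNIV. margAY Q xa z) = margA Q xa"
  unfolding margAY_def margA_def by (rule sum.swap)

lemma sum_BY:
  "(\<Sum>z\<in>UNIV. margBY Q xb z) = margB Q xb"
  unfolding margBY_def margB_def by (rule sum.swap)

lemma sum_Y:
  "(\<Sum>z\<in>UNIV. margY Q z) = (\<Sum>xa\<in>UNIV. \<Sum>xb\<in>UNIV. margAB Q xa xb)"
proof -
  have "(\<Sum>z\<in>UNIV. margY Q z) = (\<Sum>xa\<in>UNIV. \<Sum>z\<in>UNIV. \<Sum>xb\<in>UNIV. Q xa xb z)"
    unfolding margY_def by (rule sum.swap)
  also have "\<dots> = (\<Sum>xa\<in>UNIV. \<Sum>xb\<in>UNIV. margAB Q xa xb)"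
    unfolding margAB_def by (intro sum.cong refl) (rule sum.swap)
  finally show ?thesis .
qed

lemma margA_AB: "margA Q xa = (\<Sum>xb\<in>UNIV. margAB Q xa xb)"
  unfolding margA_def margAB_def ..
lemma margB_AB: "margB Q xb = (\<Sum>xa\<in>UNIV. margAB Q xa xb)"
  unfolding margB_def margAB_def by simp

lemma Q_props:
  fixes Q :: "'a::finite \<Rightarrow> 'b::finite \<Rightarrow> 'c::finite \<Rightarrow> real"
  assumes nn: "\<forall>xa xb z. 0 \<le> Q xa xb z" and qA: "\<forall>xa. 0 < margA Q xa" and qB: "\<forall>xb. 0 < margB Q xb"
    and qY: "\<forall>z. 0 < margY Q z" and tot: "(\<Sum>xa\<in>UNIV. \<Sum>xb\<in>UNIV. margAB Q xa xb) = 1"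
    and ci: "cond_indep Q"
  shows "admissible (\<lambda>xa z. margAY Q xa z / margA Q xa) (\<lambda>xb z. margBY Q xb z / margB Q xb) (margY Q)"
    and "sfun (\<lambda>xa z. margAY Q xa z / margA Q xa) (\<lambda>xb z. margBY Q xb z / margB Q xb) (margY Q) xa xb = Kmat Q xa xb"
proof -
  have nAY: "0 \<le> margAY Q xa z" for xa z using nn unfolding margAY_def by (simp add: sum_nonneg)
  have nBY: "0 \<le> margBY Q xb z" for xb z using nn unfolding margBY_def by (simp add: sum_nonneg)
  show "admissible (\<lambda>xa z. margAY Q xa z / margA Q xa) (\<lambda>xb z. margBY Q xb z / margB Q xb) (margY Q)"
    unfolding admissible_def prob_vec_def pos_prob_vec_def
    using qA qB qY nAY nBY tot
    by (auto simp: sum_divide_distrib[symmetric] sum_AY sum_BY sum_Y less_imp_le simp: less_imp_neq[OF qA[rule_format], symmetric] less_imp_neq[OF qB[rule_format], symmetric])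
  have "sfun (\<lambda>xa z. margAY Q xa z / margA Q xa) (\<lambda>xb z. margBY Q xb z / margB Q xb) (margY Q) xa xb
      = (\<Sum>z\<in>UNIV. Q xa xb z / (margA Q xa * margB Q xb))"
    unfolding sfun_def
  proof (intro sum.cong refl)
    fix z
    have "margAY Q xa z * margBY Q xb z = Q xa xb z * margY Q z" using ci unfolding cond_indep_def by simp
    then show "margAY Q xa z / margA Q xa * (margBY Q xb z / margB Q xb) / margY Q z = Q xa xb z / (margA Q xa * margB Q xb)"
      using qY[rule_format, of z] by (simp add: field_simps)
  qed
  also have "\<dots> = Kmat Q xa xb" unfolding Kmat_def margAB_def by (simp add: sum_divide_distrib)
  finally show "sfun (\<lambda>xa z. margAY Q xa z / margA Q xa) (\<lambda>xb z. margBY Q xb z / margB Q xb) (margY Q) xa xb = Kmat Q xa xb" .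
qed

theorem mainTheorem4:
  fixes P :: "'a::finite \<Rightarrow> 'b::finite \<Rightarrow> 'c::finite \<Rightarrow> real"
    and f g :: "real \<Rightarrow> real"
  assumes prior: "joint_dist P"
    and posA: "\<forall>xa. 0 < margA P xa" and posB: "\<forall>xb. 0 < margB P xb" and posY: "\<forall>y. 0 < margY P y"
    and cvx: "convex_on {0..} f" and f1: "f 1 = 0"
    and sel: "\<forall>t\<ge>0. subgrad f t (g t)"
    and ci: "cond_indep P"
  shows
    "(\<forall>Q :: 'a \<Rightarrow> 'b \<Rightarrow> 'c \<Rightarrow> real.
        (\<forall>xa xb z. 0 \<le> Q xa xb z) \<and> (\<forall>xa xb. margAB Q xa xb = margAB P xa xb) \<and>
        (\<forall>z. 0 < margY Q z) \<and> cond_indep Q \<longrightarrow>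
        is_maximizer f g P (\<lambda>xa z. margAY Q xa z / margA Q xa) (\<lambda>xb z. margBY Q xb z / margB Q xb) (margY Q)
        \<and> MIG f g P (\<lambda>xa z. margAY Q xa z / margA Q xa) (\<lambda>xb z. margBY Q xb z / margB Q xb) (margY Q)
            = MIf f P)
     \<and>
     (well_defined_prior P \<and> (\<forall>t\<ge>0. (f has_real_derivative g t) (at t within {0..})) \<and> inj_on g {0..} \<longrightarrow>
       (\<forall>hA hB p. is_maximizer f g P hA hB p \<longrightarrow>
          (\<exists>\<pi>::'c \<Rightarrow> 'c. bij \<pi> \<and>
             (\<forall>xa y. hA xa y = (\<Sum>y'\<in>{y'. \<pi> y' = y}. margAY P xa y') / margA P xa) \<and>
             (\<forall>xb y. hB xb y = (\<Sum>y'\<in>{y'. \<pi> y' = y}. margBY P xb y') / margB P xb) \<and>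
             (\<forall>y. p y = (\<Sum>y'\<in>{y'. \<pi> y' = y}. margY P y')))))"
proof -
  have Kn: "Kmat P xa xb \<ge> 0" for xa xb
    using prior posA[rule_format, of xa] posB[rule_format, of xb]
    unfolding Kmat_def margAB_def joint_dist_def by (auto intro!: divide_nonneg_pos sum_nonneg)
  have totP: "(\<Sum>xa\<in>UNIV. \<Sum>xb\<in>UNIV. margAB P xa xb) = 1"
    using prior unfolding joint_dist_def margAB_def by simp
  have term_nn: "0 \<le> margA P xa * margB P xb *
     (f (Kmat P xa xb) - f (sfun hA hB p xa xb) - g (sfun hA hB p xa xb) * (Kmat P xa xb - sfun hA hB p xa xb))"
    if adm: "admissible hA hB p" for hA hB p xa xb
  proof -
    have S: "sfun hA hB p xa xb \<ge> 0" using sfun_nonneg[OF adm] .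
    have "f (sfun hA hB p xa xb) + g (sfun hA hB p xa xb) * (Kmat P xa xb - sfun hA hB p xa xb) \<le> f (Kmat P xa xb)"
      using sel S Kn unfolding subgrad_def by auto
    thus ?thesis using posA[rule_format, of xa] posB[rule_format, of xb] by simp
  qed
  have le: "MIG f g P hA hB p \<le> MIf f P" if adm: "admissible hA hB p" for hA hB p
  proof -
    have "0 \<le> MIf f P - MIG f g P hA hB p"
      unfolding gap[OF sel posA posB adm] by (intro sum_nonneg term_nn[OF adm])
    thus ?thesis by simp
  qed
  have part1: "is_maximizer f g P (\<lambda>xa z. margAY Q xa z / margA Q xa) (\<lambda>xb z. margBY Q xb z / margB Q xb) (margY Q)
        \<and> MIG f g P (\<lambda>xa z. margAY Q xa z / margA Q xa) (\<lambda>xb z. margBY Q xb z / margB Q xb) (margY Q)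
            = MIf f P"
    if nn: "\<forall>xa xb z. 0 \<le> Q xa xb z" and mAB: "\<forall>xa xb. margAB Q xa xb = margAB P xa xb"
      and qY: "\<forall>z. 0 < margY Q z" and ciQ: "cond_indep Q" for Q :: "'a \<Rightarrow> 'b \<Rightarrow> 'c \<Rightarrow> real"
  proof -
    have mA: "margA Q xa = margA P xa" for xa using mAB by (simp add: margA_AB)
    have mB: "margB Q xb = margB P xb" for xb using mAB by (simp add: margB_AB)
    have KQ: "Kmat Q xa xb = Kmat P xa xb" for xa xb using mAB mA mB by (simp add: Kmat_def)
    have qA: "\<forall>xa. 0 < margA Q xa" using posA mA by simp
    have qB: "\<forall>xb. 0 < margB Q xb" using posB mB by simp
    have totQ: "(\<Sum>xa\<in>UNIV. \<Sum>xb\<in>UNIV. margAB Q xa xb) = 1" using totP mAB by simp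
    note QP = Q_props[OF nn qA qB qY totQ ciQ]
    have eq: "MIG f g P (\<lambda>xa z. margAY Q xa z / margA Q xa) (\<lambda>xb z. margBY Q xb z / margB Q xb) (margY Q) = MIf f P"
    proof -
      have "MIf f P - MIG f g P (\<lambda>xa z. margAY Q xa z / margA Q xa) (\<lambda>xb z. margBY Q xb z / margB Q xb) (margY Q) = 0"
        unfolding gap[OF sel posA posB QP(1)] QP(2) KQ by simp
      thus ?thesis by simp
    qed
    show ?thesis using QP(1) eq le unfolding is_maximizer_def by auto
  qed
  show ?thesis
  proof (intro conjI allI impI)
    fix Q :: "'a \<Rightarrow> 'b \<Rightarrow> 'c \<Rightarrow> real"
    assume "(\<forall>xa xb z. 0 \<le> Q xa xb z) \<and> (\<forall>xa xb. margAB Q xa xb = margAB P xa xb) \<and>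
        (\<forall>z. 0 < margY Q z) \<and> cond_indep Q"
    thus "is_maximizer f g P (\<lambda>xa z. margAY Q xa z / margA Q xa) (\<lambda>xb z. margBY Q xb z / margB Q xb) (margY Q)"
       "MIG f g P (\<lambda>xa z. margAY Q xa z / margA Q xa) (\<lambda>xb z. margBY Q xb z / margB Q xb) (margY Q) = MIf f P"
      using part1 by blast+
  next
    fix hA hB p
    assume H: "well_defined_prior P \<and> (\<forall>t\<ge>0. (f has_real_derivative g t) (at t within {0..})) \<and> inj_on g {0..}"
      and mx: "is_maximizer f g P hA hB p"
    have wd: "well_defined_prior P" and inj: "inj_on g {0..}" using H by auto
    have nnP: "\<forall>xa xb z. 0 \<le> P xa xb z" using prior unfolding joint_dist_def by simp
    note PP = Q_props[OF nnP posA posB posY totP ci]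
    have p1P: "MIG f g P (\<lambda>xa z. margAY P xa z / margA P xa) (\<lambda>xb z. margBY P xb z / margB P xb) (margY P) = MIf f P"
      using part1[OF nnP _ posY ci] by simp
    have adm: "admissible hA hB p" using mx unfolding is_maximizer_def by simp
    have "MIf f P \<le> MIG f g P hA hB p"
    proof -
      have "\<forall>hA' hB' p'. admissible hA' hB' p' \<longrightarrow> MIG f g P hA' hB' p' \<le> MIG f g P hA hB p"
        using mx unfolding is_maximizer_def by blast
      hence "MIG f g P (\<lambda>xa z. margAY P xa z / margA P xa) (\<lambda>xb z. margBY P xb z / margB P xb) (margY P) \<le> MIG f g P hA hB p"
        using PP(1) by blast
      thus ?thesis using p1P by simp
    qed
    hence "MIf f P - MIG f g P hA hB p = 0" using le[OF adm] by simp
    hence z: "(\<Sum>xa\<in>UNIV. \<Sum>xb\<in>UNIV. margA P xa * margB P xb *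
     (f (Kmat P xa xb) - f (sfun hA hB p xa xb) - g (sfun hA hB p xa xb) * (Kmat P xa xb - sfun hA hB p xa xb))) = 0"
      unfolding gap[OF sel posA posB adm] .
    have SK: "sfun hA hB p xa xb = Kmat P xa xb" for xa xb
    proof -
      have "(\<Sum>xb\<in>UNIV. margA P xa * margB P xb *
        (f (Kmat P xa xb) - f (sfun hA hB p xa xb) - g (sfun hA hB p xa xb) * (Kmat P xa xb - sfun hA hB p xa xb))) = 0"
        using z by (subst (asm) sum_nonneg_eq_0_iff) (auto intro!: sum_nonneg term_nn[OF adm])
      hence "margA P xa * margB P xb *
        (f (Kmat P xa xb) - f (sfun hA hB p xa xb) - g (sfun hA hB p xa xb) * (Kmat P xa xb - sfun hA hB p xa xb)) = 0"
        by (subst (asm) sum_nonneg_eq_0_iff) (auto intro!: term_nn[OF adm])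
      hence "f (Kmat P xa xb) = f (sfun hA hB p xa xb) + g (sfun hA hB p xa xb) * (Kmat P xa xb - sfun hA hB p xa xb)"
        using posA[rule_format, of xa] posB[rule_format, of xb] by simp
      thus ?thesis using subgrad_eq[OF sel inj sfun_nonneg[OF adm] Kn] by simp
    qed
    have s1: "solves_system P (\<lambda>xa z. margAY P xa z / margA P xa) (\<lambda>xb z. margBY P xb z / margB P xb) (margY P)"
      using PP unfolding solves_system_def admissible_def sfun_def by auto
    have s2: "solves_system P hA hB p"
      using adm SK unfolding solves_system_def admissible_def sfun_def by auto
    obtain \<pi> :: "'c \<Rightarrow> 'c" where bj: "bij \<pi>" and r: "\<forall>y. margY P y = p (\<pi> y)"
      and a: "\<forall>xa y. margAY P xa y / margA P xa = hA xa (\<pi> y)"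
      and b: "\<forall>xb y. margBY P xb y / margB P xb = hB xb (\<pi> y)"
      using wd s1 s2 unfolding well_defined_prior_def by blast
    have single: "{y'. \<pi> y' = y} = {inv \<pi> y}" for y
      using bj by (auto simp: bij_def surj_f_inv_f inv_f_f)
    have pi_inv: "\<pi> (inv \<pi> y) = y" for y using bj by (simp add: bij_def surj_f_inv_f)
    show "\<exists>\<pi>::'c \<Rightarrow> 'c. bij \<pi> \<and>
             (\<forall>xa y. hA xa y = (\<Sum>y'\<in>{y'. \<pi> y' = y}. margAY P xa y') / margA P xa) \<and>
             (\<forall>xb y. hB xb y = (\<Sum>y'\<in>{y'. \<pi> y' = y}. margBY P xb y') / margB P xb) \<and>
             (\<forall>y. p y = (\<Sum>y'\<in>{y'. \<pi> y' = y}. margY P y'))"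
      by (rule exI[of _ \<pi>]) (simp add: bj single a b r pi_inv)
  qed
qed

end
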